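(* For $0\le v\le 1$ and $a,b>0$, $$L(a,b)\le A\left(L_v(a,b),L_{1-v}(a,b)\right)\le A(a,b)$$ and $$L(a,b)\le L\left(A_v(a,b),A_{1-v}(a,b)\right)\le A(a,b).$$
   Context: For $x,y>0$: $A(x,y):=\frac{x+y}{2}$, $A_v(x,y):=(1-v)x+vy$, and the logarithmic mean $L(x,y):=\frac{x-y}{\log x-\log y}$ for $x\neq y$, $L(x,x):=x$. For $0<v<1$ and $a\ne b$ the weighted logarithmic mean is $$L_v(a,b):=\frac{1}{\log a-\log b}\left(\frac{1-v}{v}(a-a^{1-v}b^v)+\frac{v}{1-v}(a^{1-v}b^v-b)\right),$$ with $L_v(a,a):=a$, and for the endpoint values (by continuity in $v$) $L_0(a,b):=a$, $L_1(a,b):=b$. Note $L_{1/2}(a,b)=L(a,b)$. *)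

theory Defs
  imports Complex_Main
begin

definition AM :: "real \<Rightarrow> real \<Rightarrow> real" where
  "AM x y = (x + y) / 2"

definition AMw :: "real \<Rightarrow> real \<Rightarrow> real \<Rightarrow> real" where
  "AMw v x y = (1 - v) * x + v * y"

definition LM :: "real \<Rightarrow> real \<Rightarrow> real" where
  "LM x y = (if x = y then x else (x - y) / (ln x - ln y))"

definition LMw :: "real \<Rightarrow> real \<Rightarrow> real \<Rightarrow> real" where
  "LMw v a b =
    (if v = 0 then a
     else if v = 1 then b
     else if a = b then a
     else (1 / (ln a - ln b)) *
          ((1 - v) / v * (a - a powr (1 - v) * b powr v)
           + v / (1 - v) * (a powr (1 - v) * b powr v - b)))"

end

theory Submission imports Defs begin

lemma G1:
  fixes p d l :: real
  assumes "0 \<le> l" "l \<le> 1" "0 \<le> d" "d < p"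
  shows "l * (ln (p+d) - ln (p-d)) - (ln (p+l*d) - ln (p-l*d)) \<ge> 0"
proof -
  let ?f = "\<lambda>x. l * (ln (p+x) - ln (p-x)) - (ln (p+l*x) - ln (p-l*x))"
  have p: "p > 0" using assms by linarith
  have "?f 0 \<le> ?f d"
  proof (rule DERIV_nonneg_imp_increasing_open[OF assms(3)])
    fix x :: real assume x: "0 < x" "x < d"
    have lx: "l*x \<le> x" using assms x by (simp add: mult_left_le_one_le)
    have lx0: "0 \<le> l*x" using assms x by simp
    have xp: "x*x < p*p" using x assms by (simp add: mult_strict_mono)
    have lxx: "(l*x)*(l*x) \<le> x*x" using lx lx0 by (simp add: mult_mono)
    have pos: "p+x > 0" "p-x>0" "p+l*x>0" "p-l*x>0" "p*p-x*x > 0" "p*p-(l*x)*(l*x) > 0"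
      using x assms lx lx0 p xp lxx by linarith+
    have "(?f has_real_derivative (l * (1/(p+x) + 1/(p-x)) - (l/(p+l*x) + l/(p-l*x)))) (at x)"
      using pos by (auto intro!: derivative_eq_intros simp: divide_simps)
    moreover have "l * (1/(p+x) + 1/(p-x)) - (l/(p+l*x) + l/(p-l*x)) \<ge> 0"
    proof -
      have e1: "1/(p+x) + 1/(p-x) = 2*p/(p*p-x*x)" using pos by (simp add: field_simps)
      have e2: "l/(p+l*x) + l/(p-l*x) = l*(2*p/(p*p-(l*x)*(l*x)))" using pos by (simp add: field_simps)
      have "(l*x)*(l*x) \<le> x*x" using lx lx0 by (simp add: mult_mono)
      moreover have "x*x < p*p" using x assms by (simp add: mult_strict_mono)
      ultimately have "2*p/(p*p-(l*x)*(l*x)) \<le> 2*p/(p*p-x*x)" using p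
        by (intro divide_left_mono) auto
      hence "l*(2*p/(p*p-(l*x)*(l*x))) \<le> l*(2*p/(p*p-x*x))" using assms(1) by (rule mult_left_mono)
      thus ?thesis unfolding e1 e2 by linarith
    qed
    ultimately show "\<exists>y. (?f has_real_derivative y) (at x) \<and> 0 \<le> y" by blast
  next
    have "\<forall>x\<in>{0..d}. 0 < p + x \<and> 0 < p - x \<and> 0 < p + l*x \<and> 0 < p - l*x"
    proof
      fix x assume x: "x \<in> {0..d}"
      have "l*x \<le> x" "0 \<le> l*x" using assms x by (auto simp: mult_left_le_one_le)
      thus "0 < p + x \<and> 0 < p - x \<and> 0 < p + l*x \<and> 0 < p - l*x" using x assms by auto
    qed
    thus "continuous_on {0..d} ?f" by (intro continuous_intros) auto
  qed
  thus ?thesis by simp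
qed

lemma G2:
  fixes p d :: real
  assumes "0 \<le> d" "d < p"
  shows "2*d/p \<le> ln (p+d) - ln (p-d)"
proof -
  let ?f = "\<lambda>x. (ln (p+x) - ln (p-x)) - 2*x/p"
  have p: "p > 0" using assms by linarith
  have "?f 0 \<le> ?f d"
  proof (rule DERIV_nonneg_imp_increasing_open[OF assms(1)])
    fix x :: real assume x: "0 < x" "x < d"
    have pos: "p+x > 0" "p-x>0" "p*p-x*x > 0" 
      using x assms p by (auto simp: mult_strict_mono)
    have "(?f has_real_derivative ((1/(p+x) + 1/(p-x)) - 2/p)) (at x)"
      using pos by (auto intro!: derivative_eq_intros simp: field_simps)
    moreover have "(1/(p+x) + 1/(p-x)) - 2/p \<ge> 0"
    proof -
      have e1: "1/(p+x) + 1/(p-x) = 2*p/(p*p-x*x)" using pos by (simp add: field_simps)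
      have "x*x < p*p" using x assms by (simp add: mult_strict_mono)
      hence "2/p \<le> 2*p/(p*p-x*x)" using p x by (simp add: field_simps)
      thus ?thesis unfolding e1 by simp
    qed
    ultimately show "\<exists>y. (?f has_real_derivative y) (at x) \<and> 0 \<le> y" by blast
  next
    show "continuous_on {0..d} ?f" using assms by (intro continuous_intros) auto
  qed
  thus ?thesis by simp
qed

lemma F1:
  fixes u w :: real
  assumes "0 \<le> w" "w \<le> 1" "0 \<le> u"
  shows "sinh (w*u) \<le> w * sinh u"
proof -
  let ?f = "\<lambda>x. w * sinh x - sinh (w*x)"
  have "?f 0 \<le> ?f u"
  proof (rule DERIV_nonneg_imp_increasing_open[OF assms(3)])
    fix x :: real assume x: "0 < x" "x < u"
    have "(?f has_real_derivative (w * cosh x - cosh (w*x) * w)) (at x)"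
      by (auto intro!: derivative_eq_intros)
    moreover have "cosh (w*x) \<le> cosh x"
      using assms x by (subst cosh_real_nonneg_le_iff) (auto intro: mult_left_le_one_le)
    hence "w * cosh x - cosh (w*x) * w \<ge> 0" using assms
      by (simp add: mult.commute mult_left_mono)
    ultimately show "\<exists>y. (?f has_real_derivative y) (at x) \<and> 0 \<le> y" by blast
  next
    show "continuous_on {0..u} ?f" by (intro continuous_intros)
  qed
  thus ?thesis by simp
qed

lemma F2:
  fixes u w :: real
  assumes "0 \<le> w" "w \<le> 1" "0 \<le> u"
  shows "sinh u - sinh (w*u) \<le> (1-w) * u * cosh u"
proof -
  let ?f = "\<lambda>t. sinh (t*u) - t*u*cosh u"
  have "?f w \<ge> ?f 1"
  proof (rule DERIV_nonpos_imp_decreasing_open[OF assms(2)])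
    fix x :: real assume x: "w < x" "x < 1"
    have "(?f has_real_derivative (cosh (x*u) * u - u * cosh u)) (at x)"
      by (auto intro!: derivative_eq_intros)
    moreover have "cosh (x*u) \<le> cosh u"
      using assms x by (subst cosh_real_nonneg_le_iff) (auto intro: mult_left_le_one_le)
    hence "cosh (x*u) * u - u * cosh u \<le> 0" using assms
      by (simp add: mult.commute mult_left_mono)
    ultimately show "\<exists>y. (?f has_real_derivative y) (at x) \<and> y \<le> 0" by blast
  next
    show "continuous_on {w..1} ?f" by (intro continuous_intros)
  qed
  thus ?thesis by (simp add: algebra_simps)
qed


lemma LM_sym: "LM x y = LM y x"
proof -
  have "(y - x) / (ln y - ln x) = (-(x - y)) / (-(ln x - ln y))" by simp
  also have "\<dots> = (x - y) / (ln x - ln y)" by (rule minus_divide_divide)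
  finally show ?thesis unfolding LM_def by auto
qed

lemma Phi_le:
  fixes p e :: real
  assumes "0 \<le> e" "e < p"
  shows "LM (p+e) (p-e) \<le> p"
proof (cases "e = 0")
  case True thus ?thesis by (simp add: LM_def)
next
  case False
  hence e: "e > 0" using assms by simp
  have S: "2*e/p \<le> ln (p+e) - ln (p-e)" using G2 assms by blast
  have p: "p > 0" using assms by simp
  have "2*e/p > 0" using e p by simp
  hence Spos: "ln (p+e) - ln (p-e) > 0" using S by linarith
  have "LM (p+e) (p-e) = 2*e / (ln (p+e) - ln (p-e))" using e by (simp add: LM_def)
  also have "\<dots> \<le> p" using S Spos p by (simp add: divide_simps mult.commute)
  finally show ?thesis .
qed

lemma Phi_mono:
  fixes p e1 e2 :: real
  assumes "0 \<le> e1" "e1 \<le> e2" "e2 < p"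
  shows "LM (p+e2) (p-e2) \<le> LM (p+e1) (p-e1)"
proof (cases "e1 = 0")
  case True thus ?thesis using Phi_le[of e2 p] assms by (simp add: LM_def)
next
  case False
  hence e1: "e1 > 0" using assms by simp
  have p: "p > 0" using assms by simp
  have S1: "2*e1/p \<le> ln (p+e1) - ln (p-e1)" using G2 assms by simp
  have "2*e1/p > 0" using e1 p by simp
  hence S1pos: "ln (p+e1) - ln (p-e1) > 0" using S1 by linarith
  have S2: "2*e2/p \<le> ln (p+e2) - ln (p-e2)" using G2 assms by simp
  have "2*e2/p > 0" using e1 p assms by simp
  hence S2pos: "ln (p+e2) - ln (p-e2) > 0" using S2 by linarith
  have g: "(e1/e2) * (ln (p+e2) - ln (p-e2)) - (ln (p+(e1/e2)*e2) - ln (p-(e1/e2)*e2)) \<ge> 0"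
    using e1 assms by (intro G1) auto
  have "(e1/e2)*e2 = e1" using e1 assms by simp
  hence g': "e2 * (ln (p+e1) - ln (p-e1)) \<le> e1 * (ln (p+e2) - ln (p-e2))"
    using g e1 assms by (simp add: field_simps)
  have "LM (p+e2) (p-e2) = 2*e2 / (ln (p+e2) - ln (p-e2))" using e1 assms by (simp add: LM_def)
  also have "\<dots> \<le> 2*e1 / (ln (p+e1) - ln (p-e1))" using S1pos S2pos g'
    by (simp add: divide_simps mult.commute)
  also have "\<dots> = LM (p+e1) (p-e1)" using e1 by (simp add: LM_def)
  finally show ?thesis .
qed

lemma Phi_abs:
  fixes p e :: real
  shows "LM (p+e) (p-e) = LM (p+\<bar>e\<bar>) (p-\<bar>e\<bar>)"
  by (cases "e \<ge> 0") (auto simp: LM_sym)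

lemma core:
  fixes u w :: real
  assumes "u > 0" "\<bar>w\<bar> < 1"
  shows "sinh u * (1 - w^2) \<le> sinh u * (1 + w^2) - 2*w*sinh (w*u)
       \<and> sinh u * (1 + w^2) - 2*w*sinh (w*u) \<le> u * cosh u * (1 - w^2)"
proof -
  define z where "z = \<bar>w\<bar>"
  have z: "0 \<le> z" "z \<le> 1" using assms by (auto simp: z_def)
  have wz: "2*w*sinh (w*u) = 2*z * sinh (z*u)" "w^2 = z^2"
    by (cases "w \<ge> 0"; simp add: z_def)+
  have f1: "sinh (z*u) \<le> z * sinh u" using F1 z assms by simp
  have f2: "sinh u - sinh (z*u) \<le> (1-z) * u * cosh u" using F2 z assms by simp
  have f3: "sinh u \<le> u * cosh u" using F2[of 0 u] assms by simp
  have a1: "z * sinh (z*u) \<le> z * (z * sinh u)" by (rule mult_left_mono[OF f1 z(1)])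
  have a2: "2*z*(sinh u - (1-z) * u * cosh u) \<le> 2*z*sinh (z*u)"
    using mult_left_mono[OF f2, of "2*z"] z by (simp add: algebra_simps)
  have a3: "(1-z)^2 * sinh u \<le> (1-z)^2 * (u * cosh u)" using f3 by (rule mult_left_mono) simp
  have i1: "(sinh u * (1 + z^2) - 2*z*sinh (z*u)) - sinh u * (1 - z^2) = 2 * (z * (z * sinh u) - z * sinh (z*u))"
    by (simp add: algebra_simps power2_eq_square)
  have i2: "u * cosh u * (1 - z^2) - (sinh u * (1 + z^2) - 2*z*sinh (z*u))
     = ((1-z)^2 * (u * cosh u) - (1-z)^2 * sinh u) + (2*z*sinh (z*u) - 2*z*(sinh u - (1-z) * u * cosh u))"
    by (simp add: algebra_simps power2_eq_square)
  have "0 \<le> (sinh u * (1 + z^2) - 2*z*sinh (z*u)) - sinh u * (1 - z^2)"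
    unfolding i1 using a1 by simp
  moreover have "0 \<le> u * cosh u * (1 - z^2) - (sinh u * (1 + z^2) - 2*z*sinh (z*u))"
    unfolding i2 using a2 a3 by simp
  ultimately show ?thesis unfolding wz by simp
qed

lemma core2:
  fixes u w :: real
  assumes "u \<noteq> 0" "\<bar>w\<bar> < 1"
  shows "sinh u / u \<le> (sinh u * (1 + w^2) - 2*w*sinh (w*u)) / (u * (1 - w^2))
       \<and> (sinh u * (1 + w^2) - 2*w*sinh (w*u)) / (u * (1 - w^2)) \<le> cosh u"
proof -
  have w: "1 - w^2 > 0" using assms
    by (simp add: abs_square_less_1)
  define t where "t = \<bar>u\<bar>"
  have t: "t > 0" using assms by (simp add: t_def)
  have c: "sinh t * (1 - w^2) \<le> sinh t * (1 + w^2) - 2*w*sinh (w*t)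
       \<and> sinh t * (1 + w^2) - 2*w*sinh (w*t) \<le> t * cosh t * (1 - w^2)"
    using core t assms by blast
  have e1: "sinh u / u = sinh t / t"
    by (cases "u \<ge> 0") (auto simp: t_def)
  have e2: "(sinh u * (1 + w^2) - 2*w*sinh (w*u)) / (u * (1 - w^2))
          = (sinh t * (1 + w^2) - 2*w*sinh (w*t)) / (t * (1 - w^2))"
  proof (cases "u \<ge> 0")
    case True thus ?thesis by (simp add: t_def)
  next
    case False
    hence tu: "t = -u" by (simp add: t_def)
    have n: "sinh t*(1+w^2) - 2*w*sinh(w*t) = -(sinh u*(1+w^2) - 2*w*sinh(w*u))" using tu by simp
    have d: "t*(1-w^2) = -(u*(1-w^2))" using tu by simp
    show ?thesis unfolding n d minus_divide_divide ..
  qed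
  have e3: "cosh u = cosh t" by (cases "u \<ge> 0") (auto simp: t_def)
  define N where "N = sinh t * (1 + w^2) - 2*w*sinh (w*t)"
  define W where "W = 1 - w^2"
  have W: "W > 0" "t * W > 0" using w t by (auto simp: W_def)
  have c1: "sinh t * W \<le> N" "N \<le> t * cosh t * W" using c by (auto simp: N_def W_def)
  have "sinh t / t = (sinh t * W) / (t * W)" using W t by simp
  also have "\<dots> \<le> N / (t * W)" using c1(1) W(2) by (intro divide_right_mono) auto
  finally have r1: "sinh t / t \<le> N / (t * W)" .
  have "N / (t * W) \<le> (t * cosh t * W) / (t * W)" using c1(2) W(2) by (intro divide_right_mono) auto
  also have "\<dots> = cosh t" using W t by simp
  finally have r2: "N / (t * W) \<le> cosh t" .
  show ?thesis unfolding e1 e2 e3 unfolding N_def[symmetric] W_def[symmetric] using r1 r2 by blast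
qed

lemma ringid:
  fixes k A B m E F iE iF :: real
  shows "(k * (A*(m*E - m*F) + B*(m*F - m*iE)) + k*(B*(m*E - m*iF) + A*(m*iF - m*iE)))/2
       = (k/2)*m*((A+B)*(E - iE) - (A-B)*(F - iF))"
  by (simp add: field_simps)

lemma fid:
  fixes u Q P m D H w :: real
  assumes "u \<noteq> 0" "Q \<noteq> 0"
  shows "(1/(2*u))/2 * m * (2*P/Q * D - 4*w/Q * H) = m * ((D/2 * P - 2*w*(H/2)) / (u * Q))"
  using assms by (simp add: field_simps)

lemma alg:
  fixes v u E F m w :: real
  assumes "0 < v" "v < 1" "u \<noteq> 0" "E > 0" "F > 0" "w = 1 - 2*v"
  shows "((1/(2*u)) * ((1-v)/v*(m*E - m*F) + v/(1-v)*(m*F - m/E))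
        + (1/(2*u)) * (v/(1-v)*(m*E - m/F) + (1-v)/v*(m/F - m/E))) / 2
       = m * (((E - 1/E)/2 * (1 + w^2) - 2*w*((F - 1/F)/2)) / (u * (1 - w^2)))"
proof -
  have v1: "1 - v \<noteq> 0" using assms by simp
  define cp where "cp = (1-v)/v + v/(1-v)"
  define cm where "cm = (1-v)/v - v/(1-v)"
  define D where "D = E - 1/E"
  define H where "H = F - 1/F"
  have W0: "1 - w^2 = 4*v*(1-v)" by (simp add: assms(6) power2_eq_square algebra_simps)
  have W: "1 - w^2 \<noteq> 0" unfolding W0 using assms by simp
  have cp: "cp = 2*(1+w^2)/(1-w^2)" unfolding cp_def using assms v1 W
    by (simp add: field_simps power2_eq_square) (simp add: assms(6) algebra_simps power2_eq_square)
  have cm: "cm = 4*w/(1-w^2)" unfolding cm_def using assms v1 W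
    by (simp add: field_simps power2_eq_square) (simp add: assms(6) algebra_simps power2_eq_square)
  have L: "((1/(2*u)) * ((1-v)/v*(m*E - m*F) + v/(1-v)*(m*F - m/E))
        + (1/(2*u)) * (v/(1-v)*(m*E - m/F) + (1-v)/v*(m/F - m/E))) / 2
       = (1/(2*u))/2 * m * (cp * D - cm * H)"
    unfolding cp_def cm_def D_def H_def using ringid[of "1/(2*u)" "(1-v)/v" m E F "v/(1-v)" "1/E" "1/F"]
    by simp
  show ?thesis unfolding L cp cm D_def[symmetric] H_def[symmetric]
    by (rule fid[OF assms(3) W])
qed

lemma LM_le_AM:
  fixes a b :: real
  assumes "a > 0" "b > 0"
  shows "LM a b \<le> AM a b"
proof -
  define p where "p = (a+b)/2"
  define d where "d = (a-b)/2"
  have ab: "a = p + d" "b = p - d" by (simp_all add: p_def d_def field_simps)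
  have "\<bar>d\<bar> < p" using assms by (simp add: p_def d_def abs_less_iff)
  hence "LM (p+\<bar>d\<bar>) (p-\<bar>d\<bar>) \<le> p" by (intro Phi_le) auto
  thus ?thesis unfolding ab AM_def using Phi_abs[of p d] by simp
qed

lemma part12:
  fixes v a b :: real
  assumes "0 \<le> v" "v \<le> 1" "a > 0" "b > 0"
  shows "LM a b \<le> AM (LMw v a b) (LMw (1 - v) a b)
       \<and> AM (LMw v a b) (LMw (1 - v) a b) \<le> AM a b"
proof (cases "v = 0 \<or> v = 1 \<or> a = b")
  case True
  have la: "LM a b \<le> AM a b" using LM_le_AM assms by blast
  show ?thesis
  proof (cases "a = b")
    case True thus ?thesis by (simp add: LMw_def LM_def AM_def)
  next
    case False
    hence "v = 0 \<or> v = 1" using \<open>v = 0 \<or> v = 1 \<or> a = b\<close> by blast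
    thus ?thesis using la by (auto simp: LMw_def AM_def)
  qed
next
  case False
  hence v: "0 < v" "v < 1" "v \<noteq> 0" "v \<noteq> 1" and ab: "a \<noteq> b" using assms by auto
  define m where "m = exp ((ln a + ln b)/2)"
  define u where "u = (ln a - ln b)/2"
  define w where "w = 1 - 2*v"
  define E where "E = exp u"
  define F where "F = exp (w*u)"
  have m: "m > 0" by (simp add: m_def)
  have EF: "E > 0" "F > 0" by (simp_all add: E_def F_def)
  have u: "u \<noteq> 0" using ab assms by (simp add: u_def)
  have s_eq: "ln a - ln b = 2*u" by (simp add: u_def)
  have wabs: "\<bar>w\<bar> < 1" using v by (simp add: w_def abs_less_iff)
  have "m * E = exp ((ln a + ln b)/2 + (ln a - ln b)/2)" by (simp add: m_def E_def u_def exp_add)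
  also have "(ln a + ln b)/2 + (ln a - ln b)/2 = ln a" by (simp add: field_simps)
  finally have ha: "a = m * E" using assms by simp
  have "m / E = exp ((ln a + ln b)/2 - (ln a - ln b)/2)" by (simp add: m_def E_def u_def exp_diff)
  also have "(ln a + ln b)/2 - (ln a - ln b)/2 = ln b" by (simp add: field_simps)
  finally have hb: "b = m / E" using assms by simp
  have "a powr (1-v) * b powr v = exp ((1-v) * ln a + v * ln b)"
    using assms by (simp add: powr_def exp_add)
  also have "(1-v) * ln a + v * ln b = (ln a + ln b)/2 + w*u" by (simp add: w_def u_def field_simps)
  also have "exp ((ln a + ln b)/2 + w*u) = m * F" by (simp add: m_def F_def exp_add)
  finally have hG: "a powr (1-v) * b powr v = m * F" .
  have "a powr v * b powr (1-v) = exp (v * ln a + (1-v) * ln b)"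
    using assms by (simp add: powr_def exp_add)
  also have "v * ln a + (1-v) * ln b = (ln a + ln b)/2 - w*u" by (simp add: w_def u_def field_simps)
  also have "exp ((ln a + ln b)/2 - w*u) = m / F" by (simp add: m_def F_def exp_diff)
  finally have hG': "a powr v * b powr (1-v) = m / F" .
  have "LMw v a b = (1/(ln a - ln b)) * ((1-v)/v*(a - a powr (1-v)*b powr v) + v/(1-v)*(a powr (1-v)*b powr v - b))"
    using v ab by (simp add: LMw_def)
  also have "\<dots> = (1/(2*u)) * ((1-v)/v*(a - m*F) + v/(1-v)*(m*F - b))"
    unfolding hG s_eq ..
  also have "\<dots> = (1/(2*u)) * ((1-v)/v*(m*E - m*F) + v/(1-v)*(m*F - m/E))"
    unfolding ha hb ..
  finally have L1: "LMw v a b = (1/(2*u)) * ((1-v)/v*(m*E - m*F) + v/(1-v)*(m*F - m/E))" .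
  have "LMw (1-v) a b = (1/(ln a - ln b)) * (v/(1-v)*(a - a powr v*b powr (1-v)) + (1-v)/v*(a powr v*b powr (1-v) - b))"
    using v ab by (simp add: LMw_def)
  also have "\<dots> = (1/(2*u)) * (v/(1-v)*(a - m/F) + (1-v)/v*(m/F - b))"
    unfolding hG' s_eq ..
  also have "\<dots> = (1/(2*u)) * (v/(1-v)*(m*E - m/F) + (1-v)/v*(m/F - m/E))"
    unfolding ha hb ..
  finally have L2: "LMw (1-v) a b = (1/(2*u)) * (v/(1-v)*(m*E - m/F) + (1-v)/v*(m/F - m/E))" .
  have sh: "sinh u = (E - 1/E)/2" "sinh (w*u) = (F - 1/F)/2" "cosh u = (E + 1/E)/2"
    by (simp_all add: E_def F_def sinh_field_def cosh_field_def exp_minus inverse_eq_divide)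
  have M: "AM (LMw v a b) (LMw (1 - v) a b) = m * ((sinh u * (1 + w^2) - 2*w*sinh (w*u)) / (u * (1 - w^2)))"
    unfolding AM_def L1 L2 sh using alg[OF v(1,2) u EF w_def] .
  have LA: "LM a b = m * (sinh u / u)"
  proof -
    have "LM a b = (a - b) / (ln a - ln b)" using ab by (simp add: LM_def)
    also have "\<dots> = (m*E - m/E) / (2*u)" unfolding s_eq unfolding ha hb ..
    also have "\<dots> = m * (sinh u / u)" unfolding sh using u by (simp add: field_simps)
    finally show ?thesis .
  qed
  have AA: "AM a b = m * cosh u" unfolding sh AM_def ha hb by (simp add: field_simps)
  have c: "sinh u / u \<le> (sinh u * (1 + w^2) - 2*w*sinh (w*u)) / (u * (1 - w^2))
       \<and> (sinh u * (1 + w^2) - 2*w*sinh (w*u)) / (u * (1 - w^2)) \<le> cosh u"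
    using core2[OF u wabs] .
  have m0: "0 \<le> m" using m by simp
  show ?thesis unfolding M LA AA using mult_left_mono[OF conjunct1[OF c] m0] mult_left_mono[OF conjunct2[OF c] m0]
    by blast
qed

theorem theorem2p10:
  fixes v a b :: real
  assumes "0 \<le> v" "v \<le> 1" "a > 0" "b > 0"
  shows "LM a b \<le> AM (LMw v a b) (LMw (1 - v) a b)
       \<and> AM (LMw v a b) (LMw (1 - v) a b) \<le> AM a b
       \<and> LM a b \<le> LM (AMw v a b) (AMw (1 - v) a b)
       \<and> LM (AMw v a b) (AMw (1 - v) a b) \<le> AM a b"
proof -
  define p where "p = (a+b)/2"
  define d where "d = (a-b)/2"
  define l where "l = 1 - 2*v"
  have ab: "a = p + d" "b = p - d" by (simp_all add: p_def d_def field_simps)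
  have dp: "\<bar>d\<bar> < p" using assms by (simp add: p_def d_def abs_less_iff)
  have l: "\<bar>l\<bar> \<le> 1" using assms by (simp add: l_def abs_le_iff)
  have ld: "\<bar>l*d\<bar> \<le> \<bar>d\<bar>" using l by (simp add: abs_mult mult_left_le_one_le)
  have x: "AMw v a b = p + l*d" "AMw (1-v) a b = p - l*d"
    by (simp_all add: AMw_def p_def d_def l_def field_simps)
  have AA: "AM a b = p" by (simp add: AM_def p_def)
  have i3: "LM a b \<le> LM (AMw v a b) (AMw (1 - v) a b)"
  proof -
    have "LM a b = LM (p+\<bar>d\<bar>) (p-\<bar>d\<bar>)" unfolding ab by (rule Phi_abs)
    also have "\<dots> \<le> LM (p+\<bar>l*d\<bar>) (p-\<bar>l*d\<bar>)" using ld dp by (intro Phi_mono) auto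
    also have "\<dots> = LM (AMw v a b) (AMw (1 - v) a b)" unfolding x by (rule Phi_abs[symmetric])
    finally show ?thesis .
  qed
  have i4: "LM (AMw v a b) (AMw (1 - v) a b) \<le> AM a b"
  proof -
    have "LM (AMw v a b) (AMw (1 - v) a b) = LM (p+\<bar>l*d\<bar>) (p-\<bar>l*d\<bar>)" unfolding x by (rule Phi_abs)
    also have "\<dots> \<le> p" using ld dp by (intro Phi_le) auto
    finally show ?thesis unfolding AA .
  qed
  show ?thesis using part12[OF assms] i3 i4 by blast
qed

end
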